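(* Let $n\ge1$ and $A\subseteq\Omega_n$. Then $\mu_{n+1}(A\times\{0,1\})=\mu_n(A)$.
   Context: For $n\ge1$, $\Omega_n$ is the set of strings $\omega=\alpha_0\alpha_1\cdots\alpha_n$ with $\alpha_k\in\{0,1\}$, $\alpha_0=0$. For $\omega=\alpha_0\cdots\alpha_n$, $\omega'=\alpha'_0\cdots\alpha'_n\in\Omega_n$ let $D^n(\omega,\omega')=2^{-n}\prod_{k=1}^n i^{|\alpha_k-\alpha_{k-1}|}\prod_{k=1}^n i^{-|\alpha'_k-\alpha'_{k-1}|}\,\delta_{\alpha_n\alpha'_n}$ ($i=\sqrt{-1}$), and for $A\subseteq\Omega_n$ let $\mu_n(A)=\sum_{\omega,\omega'\in A}D^n(\omega,\omega')$. For $A\subseteq\Omega_n$, $A\times\{0,1\}=\{\omega0,\omega1:\omega\in A\}\subseteq\Omega_{n+1}$, where $\omega a$ is the string obtained by appending $a$ to the right of $\omega$. *)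

theory Defs
  imports Complex_Main
begin

text \<open>Strings \<omega> = \<alpha>_0 \<alpha>_1 ... \<alpha>_n are lists of length n+1 over {0,1} with \<alpha>_0 = 0;
  the entry \<alpha>_k is \<omega> ! k.\<close>

definition Omega :: "nat \<Rightarrow> nat list set" where
  "Omega n = {w. length w = n + 1 \<and> set w \<subseteq> {0, 1} \<and> w ! 0 = 0}"

definition D :: "nat \<Rightarrow> nat list \<Rightarrow> nat list \<Rightarrow> complex" where
  "D n w w' =
     (1 / 2 ^ n) *
     (\<Prod>k\<in>{1..n}. \<i> ^ (nat \<bar>int (w ! k) - int (w ! (k - 1))\<bar>)) *
     (\<Prod>k\<in>{1..n}. inverse (\<i> ^ (nat \<bar>int (w' ! k) - int (w' ! (k - 1))\<bar>))) *
     (if w ! n = w' ! n then 1 else 0)"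

definition mu :: "nat \<Rightarrow> nat list set \<Rightarrow> complex" where
  "mu n A = (\<Sum>w\<in>A. \<Sum>w'\<in>A. D n w w')"

definition times01 :: "nat list set \<Rightarrow> nat list set" where
  "times01 A = {w @ [a] | w a. w \<in> A \<and> a \<in> {0, 1}}"

end

theory Submission
  imports Defs
begin

definition ph :: "nat \<Rightarrow> nat list \<Rightarrow> complex" where
  "ph n w = (\<Prod>k\<in>{1..n}. \<i> ^ (nat \<bar>int (w ! k) - int (w ! (k - 1))\<bar>))"

lemma D_ph: "D n w w' = (1 / 2 ^ n) * ph n w * inverse (ph n w') * (if w ! n = w' ! n then 1 else 0)"
  unfolding D_def ph_def by (simp add: prod_inversef[symmetric] comp_def)

lemma ph_snoc:
  assumes "length w = n + 1"
  shows "ph (Suc n) (w @ [a]) = ph n w * \<i> ^ (nat \<bar>int a - int (w ! n)\<bar>)"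
proof -
  have "ph (Suc n) (w @ [a]) = (\<Prod>k\<in>{1..n}. \<i> ^ (nat \<bar>int ((w@[a]) ! k) - int ((w@[a]) ! (k - 1))\<bar>)) * \<i> ^ (nat \<bar>int a - int (w ! n)\<bar>)"
    unfolding ph_def using assms by (simp add: nth_append)
  also have "(\<Prod>k\<in>{1..n}. \<i> ^ (nat \<bar>int ((w@[a]) ! k) - int ((w@[a]) ! (k - 1))\<bar>)) = ph n w"
    unfolding ph_def using assms by (intro prod.cong) (auto simp: nth_append)
  finally show ?thesis .
qed

lemma key:
  assumes "length w = n + 1" "length w' = n + 1" "w ! n \<in> {0,1}" "w' ! n \<in> {0,1}"
  shows "(\<Sum>a\<in>{0::nat,1}. \<Sum>b\<in>{0::nat,1}. D (n+1) (w @ [a]) (w' @ [b])) = D n w w'"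
proof -
  have e: "\<And>a b. D (n+1) (w @ [a]) (w' @ [b]) = (1 / 2 ^ (n+1)) * ph n w * inverse (ph n w') *
      (\<i> ^ (nat \<bar>int a - int (w ! n)\<bar>) * inverse (\<i> ^ (nat \<bar>int b - int (w' ! n)\<bar>)) * (if a = b then 1 else 0))"
    unfolding D_ph using assms by (simp add: ph_snoc[OF assms(1)] ph_snoc[OF assms(2)] nth_append)
  have s: "(\<Sum>a\<in>{0::nat,1}. \<Sum>b\<in>{0::nat,1}. (\<i> ^ (nat \<bar>int a - int (w ! n)\<bar>) * inverse (\<i> ^ (nat \<bar>int b - int (w' ! n)\<bar>)) * (if a = b then 1 else 0)))
      = (if w ! n = w' ! n then 2 else 0)"
    using assms(3,4) by auto
  have "(\<Sum>a\<in>{0::nat,1}. \<Sum>b\<in>{0::nat,1}. D (n+1) (w @ [a]) (w' @ [b])) =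
     (1 / 2 ^ (n+1)) * ph n w * inverse (ph n w') * (if w ! n = w' ! n then 2 else 0)"
    unfolding e by (simp only: sum_distrib_left[symmetric] s)
  also have "\<dots> = D n w w'" unfolding D_ph by simp
  finally show ?thesis .
qed

lemma cart4: "(\<Sum>p\<in>A \<times> B. \<Sum>q\<in>A \<times> B. F (fst p) (snd p) (fst q) (snd q)) =
   (\<Sum>w\<in>A. \<Sum>a\<in>B. \<Sum>w'\<in>A. \<Sum>b\<in>B. F w a w' b)"
proof -
  have i: "\<And>w a. (\<Sum>q\<in>A \<times> B. F w a (fst q) (snd q)) = (\<Sum>w'\<in>A. \<Sum>b\<in>B. F w a w' b)"
    by (simp only: sum.cartesian_product split_def)
  have "(\<Sum>p\<in>A \<times> B. \<Sum>q\<in>A \<times> B. F (fst p) (snd p) (fst q) (snd q)) =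
     (\<Sum>p\<in>A \<times> B. \<Sum>w'\<in>A. \<Sum>b\<in>B. F (fst p) (snd p) w' b)"
    by (simp only: i)
  also have "\<dots> = (\<Sum>w\<in>A. \<Sum>a\<in>B. \<Sum>w'\<in>A. \<Sum>b\<in>B. F w a w' b)"
    unfolding sum.cartesian_product[of "\<lambda>w a. \<Sum>w'\<in>A. \<Sum>b\<in>B. F w a w' b" B A]
    by (rule sum.cong) auto
  finally show ?thesis .
qed

theorem lemma3p1:
  fixes n :: nat and A :: "nat list set"
  assumes "n \<ge> 1" and "A \<subseteq> Omega n"
  shows "mu (n + 1) (times01 A) = mu n A"
proof -
  let ?h = "\<lambda>(w, a). w @ [a::nat]"
  have T: "times01 A = ?h ` (A \<times> {0,1})"
    unfolding times01_def by auto
  have inj: "inj_on ?h (A \<times> {0,1})"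
    using assms(2) by (auto simp: inj_on_def Omega_def)
  have mem: "\<And>w. w \<in> A \<Longrightarrow> length w = n + 1 \<and> w ! n \<in> {0,1}"
  proof -
    fix w assume "w \<in> A"
    then have "length w = n + 1" "set w \<subseteq> {0,1}" using assms(2) by (auto simp: Omega_def)
    moreover have "w ! n \<in> set w" using \<open>length w = n + 1\<close> by (intro nth_mem) simp
    ultimately show "length w = n + 1 \<and> w ! n \<in> {0,1}" by blast
  qed
  have "mu (n + 1) (times01 A) = (\<Sum>p\<in>A \<times> {0,1}. \<Sum>q\<in>A \<times> {0,1}. D (n+1) (?h p) (?h q))"
    unfolding mu_def T sum.reindex[OF inj] by (simp add: sum.reindex[OF inj] comp_def)
  also have "\<dots> = (\<Sum>w\<in>A. \<Sum>a\<in>{0,1}. \<Sum>w'\<in>A. \<Sum>b\<in>{0,1}. D (n+1) (w @ [a]) (w' @ [b]))"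
    using cart4[of "\<lambda>w a w' b. D (n+1) (w @ [a]) (w' @ [b])" A "{0,1}"] by (simp add: split_def)
  also have "\<dots> = (\<Sum>w\<in>A. \<Sum>w'\<in>A. \<Sum>a\<in>{0,1}. \<Sum>b\<in>{0,1}. D (n+1) (w @ [a]) (w' @ [b]))"
    by (intro sum.cong refl sum.swap)
  also have "\<dots> = mu n A"
    unfolding mu_def by (intro sum.cong refl key) (auto dest: mem)
  finally show ?thesis .
qed

end
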